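(* Let $C$ be a commutative ring and work in the free associative $C$-algebra $C\{x,t\}$ on noncommuting indeterminates $x_1,\dots,x_{n+1}$, $t_1,t_2,\dots$ and $z$. Let $f(x_1,\dots,x_n,x_{n+1})$ (possibly involving the $t_i$ but not $z$) be multilinear in $x_1,\dots,x_{n+1}$ and alternating in $x_1,\dots,x_n$. Then $$\sum_{j=0}^n(-1)^j\sum_{\substack{S\subseteq\{1,\dots,n\}\\|S|=j}} f\big(x_1^{S},\dots,x_n^{S},\,z^{n-j}x_{n+1}\big)\in\mathcal{CAP}_{n+1},$$ where $x_i^S=zx_i$ if $i\in S$ and $x_i^S=x_i$ otherwise. (In the paper's notation: $\sum_{j=0}^n(-1)^j\delta^{(x,n)}_{j,z}(f(x_1,\dots,x_n,z^{n-j}x_{n+1}))\equiv0$ modulo $\mathcal{CAP}_{n+1}$, where $\delta^{(x,n)}_{j,z}$ substitutes $z$ in front of $j$ of the first $n$ arguments only.)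
   Context: $\mathrm{Cap}_{m}(x_1,\dots,x_m;y_1,\dots,y_m)=\sum_{\pi\in S_m}\operatorname{sgn}(\pi)x_{\pi(1)}y_1\cdots x_{\pi(m)}y_m$. $\mathcal{CAP}_{n+1}$ denotes the T-ideal of the free algebra generated by $\mathrm{Cap}_{n+1}$, i.e. the smallest ideal containing $\mathrm{Cap}_{n+1}$ and closed under all substitutions of indeterminates by elements of the free algebra. A polynomial multilinear in $x_1,\dots,x_n$ is alternating in them if interchanging any two of them negates it. *)

theory Defs
  imports "HOL-Combinatorics.Permutations"
begin

text \<open>Indeterminates of the free algebra: x_i, t_i, auxiliary y_i (used only to
write down the generator Cap of the T-ideal), and z.\<close>
datatype var = X nat | T nat | Y nat | Z

text \<open>Elements of the free associative C-algebra: coefficient functions on words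
(noncommutative monomials) with finite support.\<close>
type_synonym 'c fa = "var list \<Rightarrow> 'c"

definition fpoly :: "'c::comm_ring_1 fa \<Rightarrow> bool" where
  "fpoly p \<longleftrightarrow> finite {w. p w \<noteq> 0}"

definition fmon :: "var list \<Rightarrow> 'c::comm_ring_1 fa" where
  "fmon w = (\<lambda>u. if u = w then 1 else 0)"

definition fadd :: "'c::comm_ring_1 fa \<Rightarrow> 'c fa \<Rightarrow> 'c fa" where
  "fadd p q = (\<lambda>w. p w + q w)"

definition fmul :: "'c::comm_ring_1 fa \<Rightarrow> 'c fa \<Rightarrow> 'c fa" where
  "fmul p q = (\<lambda>w. \<Sum>i\<le>length w. p (take i w) * q (drop i w))"

definition fprod_list :: "'c::comm_ring_1 fa list \<Rightarrow> 'c fa" where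
  "fprod_list ps = foldr fmul ps (fmon [])"

text \<open>Substitution of indeterminates by elements of the free algebra
(the algebra endomorphism determined by \<sigma>).\<close>
definition fsubst :: "(var \<Rightarrow> 'c::comm_ring_1 fa) \<Rightarrow> 'c fa \<Rightarrow> 'c fa" where
  "fsubst \<sigma> p = (\<lambda>u. \<Sum>w\<in>{w. p w \<noteq> 0}. p w * fprod_list (map \<sigma> w) u)"

definition fcap :: "nat \<Rightarrow> (nat \<Rightarrow> 'c::comm_ring_1 fa) \<Rightarrow> (nat \<Rightarrow> 'c fa) \<Rightarrow> 'c fa" where
  "fcap m xs ys = (\<lambda>u. \<Sum>\<pi>\<in>{\<pi>. \<pi> permutes {1..m}}.
      of_int (sign \<pi>) * fprod_list (concat (map (\<lambda>i. [xs (\<pi> i), ys i]) [1..<m+1])) u)"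

inductive_set tideal :: "'c::comm_ring_1 fa \<Rightarrow> 'c fa set" for g where
  gen: "g \<in> tideal g"
| zero: "(\<lambda>_. 0) \<in> tideal g"
| add: "a \<in> tideal g \<Longrightarrow> b \<in> tideal g \<Longrightarrow> fadd a b \<in> tideal g"
| lmul: "a \<in> tideal g \<Longrightarrow> fpoly p \<Longrightarrow> fmul p a \<in> tideal g"
| rmul: "a \<in> tideal g \<Longrightarrow> fpoly p \<Longrightarrow> fmul a p \<in> tideal g"
| subst: "a \<in> tideal g \<Longrightarrow> (\<forall>v. fpoly (\<sigma> v)) \<Longrightarrow> fsubst \<sigma> a \<in> tideal g"

definition CAP :: "nat \<Rightarrow> 'c::comm_ring_1 fa set" where
  "CAP m = tideal (fcap m (\<lambda>i. fmon [X i]) (\<lambda>i. fmon [Y i]))"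

definition in_x_t :: "nat \<Rightarrow> 'c::comm_ring_1 fa \<Rightarrow> bool" where
  "in_x_t k f \<longleftrightarrow> fpoly f \<and>
     (\<forall>w. f w \<noteq> 0 \<longrightarrow> set w \<subseteq> X ` {1..k} \<union> range T)"

definition multilinear :: "nat \<Rightarrow> 'c::comm_ring_1 fa \<Rightarrow> bool" where
  "multilinear k f \<longleftrightarrow> (\<forall>w. f w \<noteq> 0 \<longrightarrow> (\<forall>i\<in>{1..k}. count_list w (X i) = 1))"

definition swapx :: "nat \<Rightarrow> nat \<Rightarrow> var \<Rightarrow> var" where
  "swapx i j v = (if v = X i then X j else if v = X j then X i else v)"

definition alternating :: "nat \<Rightarrow> 'c::comm_ring_1 fa \<Rightarrow> bool" where
  "alternating n f \<longleftrightarrow> (\<forall>i\<in>{1..n}. \<forall>j\<in>{1..n}. i \<noteq> j \<longrightarrow>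
      fsubst (\<lambda>v. fmon [swapx i j v]) f = (\<lambda>w. - f w))"

definition delta_sub :: "nat \<Rightarrow> nat set \<Rightarrow> nat \<Rightarrow> var \<Rightarrow> 'c::comm_ring_1 fa" where
  "delta_sub n S j v = (case v of
      X i \<Rightarrow> (if i \<in> S \<and> i \<in> {1..n} then fmon [Z, X i]
             else if i = n + 1 then fmon (replicate (n - j) Z @ [X (n+1)])
             else fmon [X i])
    | _ \<Rightarrow> fmon [v])"

end

theory Submission
  imports Defs
begin



definition lc :: "'i set \<Rightarrow> ('i \<Rightarrow> 'c::comm_ring_1) \<Rightarrow> ('i \<Rightarrow> var list) \<Rightarrow> 'c fa" where
  "lc I c h = (\<lambda>u. \<Sum>i\<in>I. c i * fmon (h i) u)"

definition mapw :: "(var \<Rightarrow> var list) \<Rightarrow> var list \<Rightarrow> var list" where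
  "mapw g w = concat (map g w)"

lemma mapw_simps[simp]: "mapw g [] = []" "mapw g (v#w) = g v @ mapw g w"
  "mapw g (a @ b) = mapw g a @ mapw g b"
  by (simp_all add: mapw_def)

lemma mapw_comp: "mapw g (mapw h w) = mapw (\<lambda>v. mapw g (h v)) w"
  by (induction w) auto

lemma mapw_single: "mapw (\<lambda>v. [r v]) w = map r w"
  by (induction w) auto

lemma fmon_eq: "fmon w u = (if w = u then 1 else 0)"
  by (simp add: fmon_def)

lemma lc_fpoly: "finite I \<Longrightarrow> fpoly (lc I c h)"
proof -
  assume fI: "finite I"
  have "{u. lc I c h u \<noteq> 0} \<subseteq> h ` I"
  proof
    fix u assume "u \<in> {u. lc I c h u \<noteq> 0}"
    then have "(\<Sum>i\<in>I. c i * fmon (h i) u) \<noteq> 0" by (simp add: lc_def)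
    then obtain i where "i \<in> I" "c i * fmon (h i) u \<noteq> 0" by (meson sum.neutral)
    then show "u \<in> h ` I" by (auto simp: fmon_eq split: if_splits)
  qed
  then show ?thesis using fI by (simp add: fpoly_def finite_subset)
qed

lemma lc_nz: "lc I c h u \<noteq> 0 \<Longrightarrow> \<exists>i\<in>I. h i = u \<and> c i \<noteq> 0"
proof -
  assume "lc I c h u \<noteq> 0"
  then have "(\<Sum>i\<in>I. c i * fmon (h i) u) \<noteq> 0" by (simp add: lc_def)
  then obtain i where "i \<in> I" "c i * fmon (h i) u \<noteq> 0" by (meson sum.neutral)
  then show ?thesis by (auto simp: fmon_eq split: if_splits)
qed

lemma fpoly_lc: "fpoly p \<Longrightarrow> p = lc {w. p w \<noteq> 0} p id"
proof
  fix u assume fp: "fpoly p"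
  have "lc {w. p w \<noteq> 0} p id u = (\<Sum>w\<in>{w. p w \<noteq> 0}. (if w = u then p w else 0))"
    by (simp add: lc_def fmon_eq if_distrib cong: if_cong)
  also have "\<dots> = p u" using fp by (simp add: fpoly_def sum.delta')
  finally show "p u = lc {w. p w \<noteq> 0} p id u" by simp
qed

lemma fmul_fmon: "fmul (fmon a) q w = (if length a \<le> length w \<and> take (length a) w = a then q (drop (length a) w) else 0)"
proof -
  have "fmul (fmon a) q w = (\<Sum>j\<le>length w. (if j = length a then (if take j w = a then q (drop j w) else 0) else 0))"
    unfolding fmul_def
    by (rule sum.cong) (auto simp: fmon_eq)
  also have "\<dots> = (if length a \<le> length w \<and> take (length a) w = a then q (drop (length a) w) else 0)"
    by (simp add: sum.delta')
  finally show ?thesis .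
qed

lemma fmul_fmon_lc: "fmul (fmon a) (lc I c h) = lc I c (\<lambda>i. a @ h i)"
proof
  fix w
  show "fmul (fmon a) (lc I c h) w = lc I c (\<lambda>i. a @ h i) w"
  proof (cases "length a \<le> length w \<and> take (length a) w = a")
    case True
    then have "\<And>x. (x = drop (length a) w) = (a @ x = w)"
      by (metis append_eq_conv_conj)
    with True show ?thesis by (simp add: fmul_fmon lc_def fmon_eq)
  next
    case False
    then have "\<And>x. a @ x \<noteq> w" by auto
    with False show ?thesis by (simp only: fmul_fmon lc_def fmon_eq) auto
  qed
qed

lemma fmul_fmon_fmon: "fmul (fmon a) (fmon b) = fmon (a @ b)"
proof -
  have "fmon b = lc {()} (\<lambda>_. 1) (\<lambda>_. b)" by (simp add: lc_def fun_eq_iff)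
  then show ?thesis using fmul_fmon_lc[of a "{()}" "\<lambda>_. 1" "\<lambda>_. b"]
    by (simp add: lc_def fun_eq_iff)
qed

lemma fprod_fmon: "fprod_list (map (\<lambda>v. fmon (g v)) w) = fmon (mapw g w)"
  by (induction w) (simp_all add: fprod_list_def fmul_fmon_fmon)

lemma fsubst_lc:
  assumes fI: "finite I"
  shows "fsubst (\<lambda>v. fmon (g v)) (lc I c h) = lc I c (\<lambda>i. mapw g (h i))"
proof
  fix u
  let ?p = "lc I c h"
  have "fsubst (\<lambda>v. fmon (g v)) ?p u = (\<Sum>w\<in>{w. ?p w \<noteq> 0}. ?p w * fmon (mapw g w) u)"
    unfolding fsubst_def by (simp add: fprod_fmon)
  also have "\<dots> = (\<Sum>w\<in>h ` I. ?p w * fmon (mapw g w) u)"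
  proof (rule sum.mono_neutral_left)
    show "{w. ?p w \<noteq> 0} \<subseteq> h ` I"
    proof
      fix x assume "x \<in> {w. ?p w \<noteq> 0}"
      then obtain i where "i \<in> I" "h i = x" using lc_nz by force
      then show "x \<in> h ` I" by blast
    qed
  qed (use fI in auto)
  also have "\<dots> = (\<Sum>w\<in>h ` I. \<Sum>i\<in>I. c i * (if h i = w then fmon (mapw g w) u else 0))"
  proof (rule sum.cong[OF refl])
    fix w
    have "?p w * fmon (mapw g w) u = (\<Sum>i\<in>I. c i * fmon (h i) w * fmon (mapw g w) u)"
      by (simp add: lc_def sum_distrib_right)
    also have "\<dots> = (\<Sum>i\<in>I. c i * (if h i = w then fmon (mapw g w) u else 0))"
      by (rule sum.cong[OF refl]) (simp add: fmon_def)
    finally show "?p w * fmon (mapw g w) u = (\<Sum>i\<in>I. c i * (if h i = w then fmon (mapw g w) u else 0))" .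
  qed
  also have "\<dots> = (\<Sum>i\<in>I. \<Sum>w\<in>h ` I. c i * (if h i = w then fmon (mapw g w) u else 0))"
    by (rule sum.swap)
  also have "\<dots> = (\<Sum>i\<in>I. c i * fmon (mapw g (h i)) u)"
    by (rule sum.cong) (use fI in \<open>auto simp: if_distrib sum.delta cong: if_cong\<close>)
  finally show "fsubst (\<lambda>v. fmon (g v)) ?p u = lc I c (\<lambda>i. mapw g (h i)) u"
    by (simp add: lc_def)
qed

lemma tideal_smult: "a \<in> tideal g \<Longrightarrow> (\<lambda>u. c * a u) \<in> tideal g"
proof -
  assume a: "a \<in> tideal g"
  let ?p = "(\<lambda>w. if w = [] then c else 0) :: 'a fa"
  have fp: "fpoly ?p" unfolding fpoly_def
    by (rule finite_subset[of _ "{[]}"]) auto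
  have "fmul ?p a = (\<lambda>u. c * a u)"
  proof
    fix u
    have "fmul ?p a u = (\<Sum>j\<le>length u. if j = 0 then c * a u else 0)"
      unfolding fmul_def by (rule sum.cong) auto
    then show "fmul ?p a u = c * a u" by simp
  qed
  with tideal.lmul[OF a fp] show ?thesis by simp
qed

lemma tideal_sum: "finite I \<Longrightarrow> (\<forall>i\<in>I. q i \<in> tideal g) \<Longrightarrow> (\<lambda>u. \<Sum>i\<in>I. q i u) \<in> tideal g"
proof (induction I rule: finite_induct)
  case empty then show ?case by (simp add: tideal.zero)
next
  case (insert x F)
  then have "fadd (q x) (\<lambda>u. \<Sum>i\<in>F. q i u) \<in> tideal g" by (auto intro: tideal.add)
  with insert show ?case by (simp add: fadd_def)
qed




definition rn :: "(nat \<Rightarrow> nat) \<Rightarrow> var \<Rightarrow> var" where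
  "rn \<pi> v = (case v of X i \<Rightarrow> X (\<pi> i) | T i \<Rightarrow> T i | Y i \<Rightarrow> Y i | Z \<Rightarrow> Z)"

lemma rn_simps[simp]: "rn \<pi> (X i) = X (\<pi> i)" "rn \<pi> (T i) = T i" "rn \<pi> (Y i) = Y i" "rn \<pi> Z = Z"
  by (simp_all add: rn_def)

lemma rn_comp: "rn (p \<circ> q) = rn p \<circ> rn q"
  by (rule ext, case_tac x) auto

lemma rn_id[simp]: "rn id = id" "rn (\<lambda>x. x) = id"
  by (rule ext, case_tac x, auto)+

fun sp :: "(var \<Rightarrow> bool) \<Rightarrow> var list \<Rightarrow> var list \<times> (var \<times> var list) list" where
  "sp P [] = ([], [])"
| "sp P (v # u) = (case sp P u of (a, l) \<Rightarrow> if P v then ([], (v, a) # l) else (v # a, l))"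

definition jn :: "var list \<times> (var \<times> var list) list \<Rightarrow> var list" where
  "jn al = fst al @ concat (map (\<lambda>(v, s). v # s) (snd al))"

lemma jn_sp: "jn (sp P u) = u"
proof (induction u)
  case (Cons v u) then show ?case by (cases "sp P u") (simp add: jn_def)
qed (simp add: jn_def)

lemma sp_free: "(\<forall>v\<in>set (fst (sp P u)). \<not> P v) \<and> (\<forall>(x, s)\<in>set (snd (sp P u)). P x \<and> (\<forall>v\<in>set s. \<not> P v))"
proof (induction u)
  case (Cons v u) then show ?case by (cases "sp P u") auto
qed simp

lemma sp_app: "\<forall>v\<in>set a. \<not> P v \<Longrightarrow> sp P (a @ r) = (a @ fst (sp P r), snd (sp P r))"
proof (induction a)
  case (Cons v a) then show ?case by (cases "sp P (a @ r)") simp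
qed simp

lemma sp_jn:
  assumes "\<forall>v\<in>set a. \<not> P v" "\<forall>(x, s)\<in>set l. P x \<and> (\<forall>v\<in>set s. \<not> P v)"
  shows "sp P (jn (a, l)) = (a, l)"
  using assms
proof (induction l arbitrary: a)
  case Nil
  have "\<forall>v\<in>set a. \<not> P v \<Longrightarrow> sp P a = (a, [])" for a
    by (induction a) auto
  then show ?case using Nil by (simp add: jn_def)
next
  case (Cons xs l)
  obtain x s where xs: "xs = (x, s)" by (cases xs)
  have "sp P (jn (s, l)) = (s, l)" using Cons xs by auto
  then have "sp P (s @ concat (map (\<lambda>(v, s). v # s) l)) = (s, l)" by (simp add: jn_def)
  then show ?case using Cons.prems xs by (simp add: jn_def sp_app)
qed

lemma sp_count: "P x \<Longrightarrow> count_list u x = count_list (map fst (snd (sp P u))) x"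
proof (induction u)
  case (Cons v u) then show ?case by (cases "sp P u") auto
qed simp

lemma count1_distinct: "(\<forall>x\<in>set xs. count_list xs x \<le> 1) \<Longrightarrow> distinct xs"
proof (induction xs)
  case Nil then show ?case by simp
next
  case (Cons a xs)
  have "count_list xs a = 0" using Cons.prems by auto
  then have "a \<notin> set xs" by (simp add: count_list_0_iff)
  moreover have "\<forall>x\<in>set xs. count_list xs x \<le> 1"
  proof
    fix x assume "x \<in> set xs"
    then have "count_list (a # xs) x \<le> 1" using Cons.prems by simp
    then show "count_list xs x \<le> 1" by (cases "a = x") simp_all
  qed
  ultimately show ?case using Cons.IH by simp
qed

definition cw :: "nat \<Rightarrow> (nat \<Rightarrow> nat) \<Rightarrow> var list" where
  "cw N \<pi> = concat (map (\<lambda>i. [X (\<pi> i), Y i]) [1..<N+1])"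

lemma fcap_lc: "fcap N (\<lambda>i. fmon [X i]) (\<lambda>i. fmon [Y i]) = lc {\<pi>. \<pi> permutes {1..N}} (\<lambda>\<pi>. of_int (sign \<pi>)) (cw N)"
proof -
  have h1: "\<And>\<pi>. concat (map (\<lambda>i. [fmon [X (\<pi> i)], fmon [Y i]]) [1..<N+1]) = map (\<lambda>v. fmon [v]) (cw N \<pi>)"
    by (simp add: cw_def map_concat o_def)
  have h2: "\<And>w. fprod_list (map (\<lambda>v. fmon [v]) w) = (fmon w :: 'a fa)"
    using fprod_fmon[of "\<lambda>v. [v]"] by (simp add: mapw_single)
  show ?thesis unfolding fcap_def lc_def by (simp only: h1 h2 mem_Collect_eq Collect_mem_eq)
qed

definition segsub :: "var list list \<Rightarrow> var \<Rightarrow> var list" where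
  "segsub ss v = (case v of Y i \<Rightarrow> ss ! (i - 1) | _ \<Rightarrow> [v])"

definition LL :: "nat \<Rightarrow> (nat \<Rightarrow> nat) \<Rightarrow> var list list \<Rightarrow> (var \<times> var list) list" where
  "LL N \<pi> ss = map (\<lambda>i. (X (\<pi> i), ss ! (i - 1))) [1..<N+1]"

lemma mapw_cw: "a @ mapw (segsub ss) (cw N \<pi>) = jn (a, LL N \<pi> ss)"
proof -
  have "\<And>L. mapw (segsub ss) (concat (map (\<lambda>i. [X (\<pi> i), Y i]) L)) = concat (map (\<lambda>i. X (\<pi> i) # ss ! (i - 1)) L)"
    subgoal for L by (induction L) (auto simp: segsub_def)
    done
  then show ?thesis by (simp add: cw_def jn_def LL_def o_def)
qed

lemma rn_free: "\<pi> permutes {1..N} \<Longrightarrow> \<forall>v\<in>set s. v \<notin> X ` {1..N} \<Longrightarrow> map (rn \<pi>) s = s"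
proof (induction s)
  case (Cons v s)
  have "rn \<pi> v = v"
  proof (cases v)
    case (X i)
    then have "i \<notin> {1..N}" using Cons.prems by auto
    then show ?thesis using X permutes_not_in[OF Cons.prems(1)] by simp
  qed auto
  then show ?case using Cons by simp
qed simp

lemma rn_jn:
  assumes "\<pi> permutes {1..N}" "\<forall>v\<in>set a. v \<notin> X ` {1..N}" "\<forall>s\<in>set ss. \<forall>v\<in>set s. v \<notin> X ` {1..N}"
    "length ss = N"
  shows "map (rn \<pi>) (jn (a, LL N id ss)) = jn (a, LL N \<pi> ss)"
proof -
  have h0: "\<And>i. i \<in> {1..<N+1} \<Longrightarrow> map (rn \<pi>) (ss ! (i - 1)) = ss ! (i - 1)"
  proof (rule rn_free[OF assms(1)])
    fix i assume "i \<in> {1..<N+1}"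
    then have "ss ! (i - 1) \<in> set ss" using assms(4) by (intro nth_mem) auto
    then show "\<forall>v\<in>set (ss ! (i - 1)). v \<notin> X ` {1..N}" using assms(3) by blast
  qed
  have e: "map (\<lambda>i. X (\<pi> i) # map (rn \<pi>) (ss ! (i - 1))) [1..<N+1] = map (\<lambda>i. X (\<pi> i) # ss ! (i - 1)) [1..<N+1]"
    by (intro map_cong[OF refl]) (metis set_upt h0)
  have "map (rn \<pi>) (jn (a, LL N id ss)) = map (rn \<pi>) a @ concat (map (\<lambda>i. X (\<pi> i) # map (rn \<pi>) (ss ! (i - 1))) [1..<N+1])"
    by (simp only: jn_def LL_def map_append map_concat map_map o_def list.map rn_simps fst_conv snd_conv id_apply prod.case)
  also have "\<dots> = jn (a, LL N \<pi> ss)"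
    by (simp only: e rn_free[OF assms(1,2)]) (simp only: jn_def LL_def map_map o_def fst_conv snd_conv prod.case)
  finally show ?thesis .
qed




lemma fpoly_fmon: "fpoly (fmon w)"
  unfolding fpoly_def fmon_def by (rule finite_subset[of _ "{w}"]) auto

lemma LL_len[simp]: "length (LL N \<pi> ss) = N"
  by (simp add: LL_def)

lemma LL_nth: "i < N \<Longrightarrow> LL N \<pi> ss ! i = (X (\<pi> (Suc i)), ss ! i)"
  by (simp add: LL_def nth_upt del: upt_Suc)

lemma LL_snd: "length ss = N \<Longrightarrow> map snd (LL N \<pi> ss) = ss"
  by (rule nth_equalityI) (auto simp: LL_nth)

lemma LL_set: "(x, s) \<in> set (LL N \<pi> ss) \<Longrightarrow> \<exists>i\<in>{1..N}. x = X (\<pi> i) \<and> s = ss ! (i - 1)"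
  by (auto simp: LL_def)

definition PX :: "nat \<Rightarrow> var \<Rightarrow> bool" where "PX N v \<longleftrightarrow> v \<in> X ` {1..N}"

fun unX :: "var \<Rightarrow> nat" where "unX (X i) = i" | "unX _ = 0"

lemma L1:
  fixes g :: "'c::comm_ring_1 fa"
  assumes fp: "fpoly g"
    and ml: "\<And>u i. g u \<noteq> 0 \<Longrightarrow> i \<in> {1..N} \<Longrightarrow> count_list u (X i) = 1"
    and alt: "\<And>\<pi> u. \<pi> permutes {1..N} \<Longrightarrow> g (map (rn \<pi>) u) = of_int (sign \<pi>) * g u"
  shows "g \<in> CAP N"
proof -
  let ?P = "PX N"
  define Reps where "Reps = {u. g u \<noteq> 0 \<and> map fst (snd (sp ?P u)) = map X [1..<N+1]}"
  define A where "A u = fst (sp ?P u)" for u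
  define SS where "SS u = map snd (snd (sp ?P u))" for u
  define Perm where "Perm = {\<pi>. \<pi> permutes {1..N}}"
  define E where "E u = (lc Perm (\<lambda>\<pi>. of_int (sign \<pi>)) (\<lambda>\<pi>. jn (A u, LL N \<pi> (SS u))) :: 'c fa)" for u
  have finR: "finite Reps"
    by (rule finite_subset[OF _ fp[unfolded fpoly_def]]) (auto simp: Reps_def)
  have finP: "finite Perm" by (simp add: Perm_def finite_permutations)
  have EC: "E u \<in> CAP N" for u
  proof -
    have "fsubst (\<lambda>v. fmon (segsub (SS u) v)) (fcap N (\<lambda>i. fmon [X i]) (\<lambda>i. fmon [Y i])) \<in> CAP N"
      unfolding CAP_def by (rule tideal.subst[OF tideal.gen]) (simp add: fpoly_fmon)
    then have "fmul (fmon (A u)) (fsubst (\<lambda>v. fmon (segsub (SS u) v)) (fcap N (\<lambda>i. fmon [X i]) (\<lambda>i. fmon [Y i]))) \<in> CAP N"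
      unfolding CAP_def by (rule tideal.lmul) (simp add: fpoly_fmon)
    also have "fmul (fmon (A u)) (fsubst (\<lambda>v. fmon (segsub (SS u) v)) (fcap N (\<lambda>i. fmon [X i]) (\<lambda>i. fmon [Y i]))) = E u"
      unfolding fcap_lc fsubst_lc[OF finP[unfolded Perm_def]] fmul_fmon_lc mapw_cw E_def Perm_def ..
    finally show ?thesis .
  qed
  have freeA: "\<forall>w\<in>set (A u). \<not> ?P w" for u using sp_free[of ?P u] by (simp add: A_def)
  have freeS: "\<forall>s\<in>set (SS u). \<forall>w\<in>set s. \<not> ?P w" for u
    using sp_free[of ?P u] by (auto simp: SS_def)
  have repL: "snd (sp ?P u) = LL N id (SS u) \<and> length (SS u) = N" if "u \<in> Reps" for u
  proof -
    let ?l = "snd (sp ?P u)"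
    have mf: "map fst ?l = map X [1..<N+1]" using that by (simp add: Reps_def)
    then have len: "length ?l = N" by (metis length_map length_upt diff_add_inverse2)
    have "?l = LL N id (SS u)"
    proof (rule nth_equalityI)
      show "length ?l = length (LL N id (SS u))" using len by simp
      fix i assume "i < length ?l"
      then have i: "i < N" using len by simp
      have "fst (?l ! i) = X (Suc i)" using arg_cong[OF mf, of "\<lambda>xs. xs ! i"] i len by (simp add: nth_upt del: upt_Suc)
      then show "?l ! i = LL N id (SS u) ! i" using i len
        by (simp add: LL_nth SS_def prod_eq_iff)
    qed
    then show ?thesis using len by (simp add: SS_def)
  qed
  have repU: "u = jn (A u, LL N id (SS u))" if "u \<in> Reps" for u
    using repL[OF that] jn_sp[of ?P u] by (metis A_def prod.collapse)
  have LLok: "\<forall>(x, s)\<in>set (LL N \<pi> ss). ?P x \<and> (\<forall>w\<in>set s. \<not> ?P w)"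
    if "\<pi> permutes {1..N}" "length ss = N" "\<forall>s\<in>set ss. \<forall>w\<in>set s. \<not> ?P w" for \<pi> ss
  proof (clarify)
    fix x s assume "(x, s) \<in> set (LL N \<pi> ss)"
    then obtain i where i: "i \<in> {1..N}" "x = X (\<pi> i)" "s = ss ! (i - 1)" using LL_set by blast
    have "\<pi> i \<in> {1..N}" using i(1) permutes_in_image[OF that(1)] by blast
    moreover have "ss ! (i - 1) \<in> set ss" using i(1) that(2) by (intro nth_mem) auto
    ultimately show "?P x \<and> (\<forall>w\<in>set s. \<not> ?P w)" using i that(3) by (auto simp: PX_def)
  qed
  have jn_eq: "sp ?P v = (A u, LL N \<pi> (SS u))"
    if "u \<in> Reps" "\<pi> permutes {1..N}" "jn (A u, LL N \<pi> (SS u)) = v" for u \<pi> v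
    using that(3) sp_jn[OF freeA[of u] LLok[OF that(2) conjunct2[OF repL[OF that(1)]] freeS]] by simp
  have val: "g v = of_int (sign \<pi>) * g u"
    if "u \<in> Reps" "\<pi> permutes {1..N}" "jn (A u, LL N \<pi> (SS u)) = v" for u \<pi> v
  proof -
    have "map (rn \<pi>) u = jn (A u, LL N \<pi> (SS u))"
      using rn_jn[OF that(2), of "A u" "SS u"] freeA freeS repL[OF that(1)] repU[OF that(1)]
      by (metis PX_def)
    then show ?thesis using alt[OF that(2), of u] that(3) by simp
  qed
  have main: "g v = (\<Sum>u\<in>Reps. g u * E u v)" for v
  proof (cases "g v = 0")
    case True
    have "E u v = 0" if u: "u \<in> Reps" for u
      unfolding E_def lc_def
    proof (rule sum.neutral, rule ballI)
      fix \<pi> assume "\<pi> \<in> Perm"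
      then have pp: "\<pi> permutes {1..N}" by (simp add: Perm_def)
      show "of_int (sign \<pi>) * fmon (jn (A u, LL N \<pi> (SS u))) v = 0"
      proof (cases "jn (A u, LL N \<pi> (SS u)) = v")
        case True
        then have "g v = of_int (sign \<pi>) * g u" using val[OF u pp] by simp
        then have "of_int (sign \<pi>) * g v = g u"
          by (simp add: mult.assoc[symmetric] of_int_mult[symmetric])
        then show ?thesis using \<open>g v = 0\<close> u by (simp add: Reps_def)
      qed (simp add: fmon_eq)
    qed
    then show ?thesis using True by simp
  next
    case False
    obtain a l where spv: "sp ?P v = (a, l)" by (cases "sp ?P v")
    define xs where "xs = map fst l"
    define ss where "ss = map snd l"
    have fra: "\<forall>w\<in>set a. \<not> ?P w" and frl: "\<forall>(x, s)\<in>set l. ?P x \<and> (\<forall>w\<in>set s. \<not> ?P w)"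
      using sp_free[of ?P v] spv by auto
    have frs: "\<forall>s\<in>set ss. \<forall>w\<in>set s. \<not> ?P w" using frl by (auto simp: ss_def)
    have cnt: "count_list xs (X i) = 1" if "i \<in> {1..N}" for i
      using sp_count[of ?P "X i" v] ml[OF False that] that spv by (simp add: PX_def xs_def)
    have setxs: "set xs = X ` {1..N}"
    proof
      show "set xs \<subseteq> X ` {1..N}" using frl by (auto simp: xs_def PX_def)
      show "X ` {1..N} \<subseteq> set xs"
      proof
        fix x assume "x \<in> X ` {1..N}"
        then obtain i where "i \<in> {1..N}" "x = X i" by blast
        then have "count_list xs x = 1" using cnt by simp
        then show "x \<in> set xs" using count_list_0_iff[of xs x] by auto
      qed
    qed
    have dist: "distinct xs"
      by (rule count1_distinct) (use setxs cnt in auto)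
    have lenN: "length xs = N"
      using distinct_card[OF dist] setxs card_image[of X "{1..N}"] by (simp add: inj_on_def)
    have lenl: "length l = N" and lens: "length ss = N" using lenN by (simp_all add: xs_def ss_def)
    define pv where "pv i = (if i \<in> {1..N} then unX (xs ! (i - 1)) else i)" for i
    have pvX: "X (pv i) = xs ! (i - 1) \<and> pv i \<in> {1..N}" if "i \<in> {1..N}" for i
    proof -
      have "xs ! (i - 1) \<in> set xs" using that lenN by (intro nth_mem) auto
      then obtain j where "j \<in> {1..N}" "xs ! (i - 1) = X j" using setxs by auto
      then show ?thesis using that by (simp add: pv_def)
    qed
    have injpv: "inj_on pv {1..N}"
    proof (rule inj_onI)
      fix i j assume ij: "i \<in> {1..N}" "j \<in> {1..N}" "pv i = pv j"
      then have "xs ! (i - 1) = xs ! (j - 1)" using pvX by metis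
      then have "i - 1 = j - 1" using nth_eq_iff_index_eq[OF dist] ij lenN by auto
      then show "i = j" using ij by auto
    qed
    have pvperm: "pv permutes {1..N}"
    proof (rule bij_imp_permutes)
      have "pv ` {1..N} \<subseteq> {1..N}" using pvX by auto
      then have "pv ` {1..N} = {1..N}" using endo_inj_surj[OF _ _ injpv] by auto
      then show "bij_betw pv {1..N} {1..N}" using injpv by (simp add: bij_betw_def)
    qed (auto simp: pv_def)
    have Lpv: "LL N pv ss = l"
    proof (rule nth_equalityI)
      show "length (LL N pv ss) = length l" using lenl by simp
      fix i assume "i < length (LL N pv ss)"
      then have i: "i < N" by simp
      have "X (pv (Suc i)) = xs ! i" using pvX[of "Suc i"] i by simp
      then show "LL N pv ss ! i = l ! i" using i lenl
        by (simp add: LL_nth xs_def ss_def prod_eq_iff)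
    qed
    define us where "us = jn (a, LL N id ss)"
    have LLid: "id permutes {1..N}" by (simp add: permutes_id)
    have spu: "sp ?P us = (a, LL N id ss)"
      unfolding us_def by (rule sp_jn[OF fra LLok[OF LLid lens frs]])
    have vu: "v = map (rn pv) us"
    proof -
      have "v = jn (a, l)" using jn_sp[of ?P v] spv by simp
      also have "\<dots> = jn (a, LL N pv ss)" using Lpv by simp
      also have "\<dots> = map (rn pv) us"
        unfolding us_def using rn_jn[OF pvperm, of a ss] fra frs lens by (metis PX_def)
      finally show ?thesis .
    qed
    have gv: "g v = of_int (sign pv) * g us" using alt[OF pvperm] vu by simp
    have "g us \<noteq> 0" using gv False by auto
    moreover have "map fst (snd (sp ?P us)) = map X [1..<N+1]" using spu by (simp add: LL_def o_def del: upt_Suc)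
    ultimately have usR: "us \<in> Reps" by (simp add: Reps_def)
    have Aus: "A us = a" and Sus: "SS us = ss" using spu LL_snd[OF lens] by (simp_all add: A_def SS_def)
    have others: "g u * E u v = 0" if "u \<in> Reps - {us}" for u
    proof -
      have "E u v = 0"
        unfolding E_def lc_def
      proof (rule sum.neutral, rule ballI)
        fix \<pi> assume "\<pi> \<in> Perm"
        then have pp: "\<pi> permutes {1..N}" by (simp add: Perm_def)
        show "of_int (sign \<pi>) * fmon (jn (A u, LL N \<pi> (SS u))) v = 0"
        proof (cases "jn (A u, LL N \<pi> (SS u)) = v")
          case True
          have uR: "u \<in> Reps" using that by simp
          have "(A u, LL N \<pi> (SS u)) = (a, l)" using jn_eq[OF uR pp True] spv by simp
          then have "A u = a" "SS u = ss"
            using LL_snd[OF conjunct2[OF repL[OF uR]], of \<pi>] by (auto simp: ss_def)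
          then have "u = us" using repU[OF uR] by (simp add: us_def)
          then show ?thesis using that by simp
        qed (simp add: fmon_eq)
      qed
      then show ?thesis by simp
    qed
    have Eus: "E us v = of_int (sign pv)"
    proof -
      have "E us v = (\<Sum>\<pi>\<in>Perm. if \<pi> = pv then of_int (sign \<pi>) else 0)"
        unfolding E_def lc_def Aus Sus
      proof (rule sum.cong[OF refl])
        fix \<pi> assume "\<pi> \<in> Perm"
        then have pp: "\<pi> permutes {1..N}" by (simp add: Perm_def)
        have "(jn (a, LL N \<pi> ss) = v) = (\<pi> = pv)"
        proof
          assume h: "jn (a, LL N \<pi> ss) = v"
          have "sp ?P v = (a, LL N \<pi> ss)" using jn_eq[OF usR pp] h Aus Sus by simp
          then have e: "LL N \<pi> ss = LL N pv ss" using spv Lpv by simp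
          show "\<pi> = pv"
          proof
            fix i
            show "\<pi> i = pv i"
            proof (cases "i \<in> {1..N}")
              case True
              then have "LL N \<pi> ss ! (i - 1) = LL N pv ss ! (i - 1)" using e by simp
              moreover have "i - 1 < N" "Suc (i - 1) = i" using True by auto
              moreover have "LL N \<pi> ss ! (i - 1) = (X (\<pi> i), ss ! (i - 1))"
                using LL_nth[of "i - 1" N \<pi> ss] \<open>i - 1 < N\<close> \<open>Suc (i - 1) = i\<close> by simp
              moreover have "LL N pv ss ! (i - 1) = (X (pv i), ss ! (i - 1))"
                using LL_nth[of "i - 1" N pv ss] \<open>i - 1 < N\<close> \<open>Suc (i - 1) = i\<close> by simp
              ultimately have "(X (\<pi> i), ss ! (i - 1)) = (X (pv i), ss ! (i - 1))" by simp
              then show ?thesis by simp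
            next
              case False
              then show ?thesis using permutes_not_in[OF pp] permutes_not_in[OF pvperm] by simp
            qed
          qed
        next
          assume "\<pi> = pv"
          then show "jn (a, LL N \<pi> ss) = v" using Lpv jn_sp[of ?P v] spv by simp
        qed
        then show "of_int (sign \<pi>) * fmon (jn (a, LL N \<pi> ss)) v = (if \<pi> = pv then of_int (sign \<pi>) else 0)"
          by (simp add: fmon_eq)
      qed
      also have "\<dots> = of_int (sign pv)"
        using pvperm by (subst sum.delta[OF finP]) (simp add: Perm_def)
      finally show ?thesis .
    qed
    have "(\<Sum>u\<in>Reps - {us}. g u * E u v) = 0"
      by (rule sum.neutral) (use others in blast)
    then have "(\<Sum>u\<in>Reps. g u * E u v) = g us * E us v"
      using sum.remove[OF finR usR, of "\<lambda>u. g u * E u v"] by simp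
    also have "\<dots> = g v" unfolding Eus gv by (rule mult.commute)
    finally show ?thesis by simp
  qed
  have mem: "(\<lambda>v. \<Sum>u\<in>Reps. g u * E u v) \<in> CAP N"
  proof -
    have "\<forall>u\<in>Reps. (\<lambda>v. g u * E u v) \<in> CAP N"
      using tideal_smult EC unfolding CAP_def by blast
    then show ?thesis using tideal_sum[OF finR, of "\<lambda>u v. g u * E u v"] unfolding CAP_def by blast
  qed
  have eq: "(\<lambda>v. \<Sum>u\<in>Reps. g u * E u v) = g" using main by (intro ext) (rule sym)
  show ?thesis using mem unfolding eq .
qed




abbreviation tr :: "nat \<Rightarrow> nat \<Rightarrow> nat \<Rightarrow> nat" where "tr \<equiv> Transposition.transpose"

lemma swapx_rn: "swapx i j = rn (tr i j)"
proof (rule ext)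
  fix v show "swapx i j v = rn (tr i j) v"
    by (cases v) (auto simp: swapx_def Transposition.transpose_def)
qed

lemma inj_rn: "inj r \<Longrightarrow> inj (rn r)"
proof (rule injI)
  fix x y assume r: "inj r" and e: "rn r x = rn r y"
  show "x = y" using e r by (cases x; cases y) (auto dest: injD)
qed

lemma rn_invol: "rn (tr a b) (rn (tr a b) v) = v"
  by (cases v) auto

lemma map_rn_invol: "map (rn (tr a b)) (map (rn (tr a b)) u) = u"
  by (induction u) (auto simp: rn_invol)

lemma fmon_map_invol: "fmon x (map (rn (tr a b)) u) = fmon (map (rn (tr a b)) x) u"
  unfolding fmon_eq by (metis map_rn_invol)

lemma perm_fin: "p permutes {1..(n::nat)} \<Longrightarrow> permutation p"
  using permutation_permutes by blast

lemma alt_transp: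
  fixes f :: "'c::comm_ring_1 fa"
  assumes fp: "fpoly f" and alt: "alternating n f" and ij: "i \<in> {1..n}" "j \<in> {1..n}" "i \<noteq> j"
  shows "f (map (rn (tr i j)) u) = - f u"
proof -
  have e: "fsubst (\<lambda>v. fmon [swapx i j v]) f = (\<lambda>w. - f w)" using alt ij by (simp add: alternating_def)
  have "fsubst (\<lambda>v. fmon [swapx i j v]) f = lc {w. f w \<noteq> 0} f (\<lambda>w. map (rn (tr i j)) w)"
    using fsubst_lc[of "{w. f w \<noteq> 0}" "\<lambda>v. [swapx i j v]" f id] fp fpoly_lc[OF fp]
    by (simp add: fpoly_def mapw_single swapx_rn)
  then have "lc {w. f w \<noteq> 0} f (\<lambda>w. map (rn (tr i j)) w) (map (rn (tr i j)) u) = - f (map (rn (tr i j)) u)"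
    using e by metis
  moreover have "lc {w. f w \<noteq> 0} f (\<lambda>w. map (rn (tr i j)) w) (map (rn (tr i j)) u) = lc {w. f w \<noteq> 0} f id u"
    unfolding lc_def fmon_eq by (simp add: map_rn_invol inj_map_eq_map[OF inj_rn] )
  moreover have "lc {w. f w \<noteq> 0} f id u = f u" using fpoly_lc[OF fp] by metis
  ultimately show ?thesis by (metis minus_minus)
qed

lemma alt_perm:
  fixes f :: "'c::comm_ring_1 fa"
  assumes fp: "fpoly f" and alt: "alternating n f" and p: "\<rho> permutes {1..n}"
  shows "f (map (rn \<rho>) u) = of_int (sign \<rho>) * f u"
  using p finite_atLeastAtMost
proof (induction \<rho> arbitrary: u rule: permutes_induct)
  case id then show ?case by simp
next
  case (swap a b p)
  have "f (map (rn (tr a b \<circ> p)) u) = f (map (rn (tr a b)) (map (rn p) u))"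
    by (simp add: rn_comp)
  also have "\<dots> = - f (map (rn p) u)" using alt_transp[OF fp alt swap(1,2,3)] .
  also have "\<dots> = - (of_int (sign p) * f u)" using swap by simp
  also have "\<dots> = of_int (sign (tr a b \<circ> p)) * f u"
    using sign_compose[OF permutation_swap_id perm_fin[OF \<open>p permutes {1..n}\<close>], of a b] swap(3)
    by (simp add: sign_swap_id)
  finally show ?case .
qed




definition alpha :: "nat \<Rightarrow> nat \<Rightarrow> var \<Rightarrow> var list" where
  "alpha N m v = (if v = X N then replicate m Z @ [X N] else [v])"

definition fm :: "nat \<Rightarrow> nat \<Rightarrow> 'c::comm_ring_1 fa \<Rightarrow> 'c fa" where
  "fm N m f = lc {w. f w \<noteq> 0} f (\<lambda>w. mapw (alpha N m) w)"

lemma rn_alpha: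
  assumes "r N = N" "inj r"
  shows "map (rn r) (alpha N m v) = alpha N m (rn r v)"
proof (cases v)
  case (X i)
  show ?thesis
  proof (cases "i = N")
    case True then show ?thesis using X assms by (simp add: alpha_def)
  next
    case False
    then have "r i \<noteq> N" using assms by (metis injD)
    then show ?thesis using X False by (simp add: alpha_def)
  qed
qed (auto simp: alpha_def)

lemma sgn_nz: "(of_int (sign p) :: 'c::comm_ring_1) * x = 0 \<Longrightarrow> x = 0"
proof -
  assume h: "(of_int (sign p) :: 'c) * x = 0"
  have "x = (of_int (sign p * sign p) :: 'c) * x" by simp
  also have "\<dots> = of_int (sign p) * (of_int (sign p) * x)" by (simp only: of_int_mult mult.assoc)
  finally show "x = 0" using h by simp
qed

lemma map_mapw: "map r (mapw g w) = mapw (\<lambda>v. map r (g v)) w"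
  by (induction w) auto

lemma map_rn_alpha:
  assumes "r N = N" "inj r"
  shows "map (rn r) (mapw (alpha N m) w) = mapw (alpha N m) (map (rn r) w)"
  by (induction w) (auto simp: rn_alpha[OF assms])

lemma rn_inv: "\<rho> permutes S \<Longrightarrow> rn (inv \<rho>) (rn \<rho> a) = a"
  by (cases a) (simp_all add: permutes_inverses)

lemma rn_inv2: "\<rho> permutes S \<Longrightarrow> rn \<rho> (rn (inv \<rho>) a) = a"
  by (cases a) (simp_all add: permutes_inverses)

lemma map_rn_inv: "\<rho> permutes S \<Longrightarrow> map (rn (inv \<rho>)) (map (rn \<rho>) u) = u"
  by (induction u) (simp_all add: rn_inv)

lemma map_rn_inv2: "\<rho> permutes S \<Longrightarrow> map (rn \<rho>) (map (rn (inv \<rho>)) u) = u"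
  by (induction u) (simp_all add: rn_inv2)

lemma fm_alt:
  fixes f :: "'c::comm_ring_1 fa"
  assumes fp: "fpoly f" and alt: "alternating n f" and p: "\<rho> permutes {1..n}"
  shows "fm (Suc n) m f (map (rn \<rho>) u) = of_int (sign \<rho>) * fm (Suc n) m f u"
proof -
  let ?S = "{w. f w \<noteq> 0}"
  let ?q = "inv \<rho>"
  let ?a = "alpha (Suc n) m"
  have pq: "?q permutes {1..n}" using permutes_inv[OF p] .
  have qN: "?q (Suc n) = Suc n" using permutes_not_in[OF pq] by simp
  have injq: "inj ?q" using permutes_inj[OF pq] .
  have injm: "inj (map (rn ?q))" using inj_rn[OF injq] by (simp add: inj_mapI)
  have sgq: "sign ?q = sign \<rho>" using sign_inverse[OF perm_fin[OF p]] .
  have t1: "fmon (mapw ?a w) (map (rn \<rho>) u) = fmon (mapw ?a (map (rn ?q) w)) u" for w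
  proof -
    have "(mapw ?a w = map (rn \<rho>) u) = (map (rn ?q) (mapw ?a w) = u)"
      using map_rn_inv[OF p] map_rn_inv2[OF p] by metis
    then show ?thesis using map_rn_alpha[OF qN injq] by (simp add: fmon_eq)
  qed
  have t2: "f w = of_int (sign \<rho>) * f (map (rn ?q) w)" for w
  proof -
    have "f (map (rn ?q) w) = of_int (sign \<rho>) * f w" using alt_perm[OF fp alt pq] sgq by simp
    moreover have "of_int (sign \<rho>) * (of_int (sign \<rho>) :: 'c) = 1" by (simp add: of_int_mult[symmetric])
    ultimately show ?thesis by (metis mult.assoc mult_1)
  qed
  have img: "map (rn ?q) ` ?S = ?S"
  proof
    show "map (rn ?q) ` ?S \<subseteq> ?S"
    proof
      fix x assume "x \<in> map (rn ?q) ` ?S"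
      then obtain w where w: "w \<in> ?S" "x = map (rn ?q) w" by blast
      have "f w = of_int (sign \<rho>) * f x" using t2[of w] w(2) by simp
      then show "x \<in> ?S" using w(1) by auto
    qed
    show "?S \<subseteq> map (rn ?q) ` ?S"
    proof
      fix w assume w: "w \<in> ?S"
      have "f (map (rn \<rho>) w) \<noteq> 0" using alt_perm[OF fp alt p, of w] w sgn_nz[of \<rho> "f w"] by auto
      moreover have "w = map (rn ?q) (map (rn \<rho>) w)" using map_rn_inv[OF p] by simp
      ultimately show "w \<in> map (rn ?q) ` ?S" by blast
    qed
  qed
  have "fm (Suc n) m f (map (rn \<rho>) u) = (\<Sum>w\<in>?S. of_int (sign \<rho>) * (f (map (rn ?q) w) * fmon (mapw ?a (map (rn ?q) w)) u))"
    unfolding fm_def lc_def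
    by (rule sum.cong[OF refl]) (metis t1 t2 mult.assoc)
  also have "\<dots> = of_int (sign \<rho>) * (\<Sum>w\<in>?S. f (map (rn ?q) w) * fmon (mapw ?a (map (rn ?q) w)) u)"
    by (simp add: sum_distrib_left)
  also have "(\<Sum>w\<in>?S. f (map (rn ?q) w) * fmon (mapw ?a (map (rn ?q) w)) u) = (\<Sum>w\<in>map (rn ?q) ` ?S. f w * fmon (mapw ?a w) u)"
  proof -
    have ii: "inj_on (map (rn ?q)) ?S" by (rule inj_on_subset[OF injm]) simp
    show ?thesis using sum.reindex[OF ii, of "\<lambda>w. f w * fmon (mapw ?a w) u"] by (simp add: o_def)
  qed
  also have "\<dots> = fm (Suc n) m f u" unfolding img by (simp add: fm_def lc_def)
  finally show ?thesis .
qed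

definition Hm :: "nat \<Rightarrow> nat \<Rightarrow> 'c::comm_ring_1 fa \<Rightarrow> 'c fa" where
  "Hm N m f = (\<lambda>u. \<Sum>k\<in>{1..N}. of_int (sign (tr k N)) * fm N m f (map (rn (tr k N)) u))"

lemma permutes_shrink: "p permutes {1..Suc n} \<Longrightarrow> p (Suc n) = Suc n \<Longrightarrow> p permutes {1..n}"
  unfolding permutes_def by (metis atLeastAtMost_iff le_Suc_eq)

lemma Hm_alt:
  fixes f :: "'c::comm_ring_1 fa"
  assumes fp: "fpoly f" and alt: "alternating n f" and p: "\<pi> permutes {1..Suc n}"
  shows "Hm (Suc n) m f (map (rn \<pi>) u) = of_int (sign \<pi>) * Hm (Suc n) m f u"
proof -
  let ?N = "Suc n"
  let ?G = "\<lambda>k. of_int (sign (tr k ?N)) * fm ?N m f (map (rn (tr k ?N)) u)"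
  have trm: "of_int (sign (tr k ?N)) * fm ?N m f (map (rn (tr k ?N)) (map (rn \<pi>) u)) = of_int (sign \<pi>) * ?G (inv \<pi> k)"
    if k: "k \<in> {1..?N}" for k
  proof -
    define k' where "k' = inv \<pi> k"
    have k'S: "k' \<in> {1..?N}" using k permutes_in_image[OF permutes_inv[OF p]] by (simp add: k'_def)
    have pk': "\<pi> k' = k" using permutes_inverses(1)[OF p] by (simp add: k'_def)
    define \<rho> where "\<rho> = tr k ?N \<circ> \<pi> \<circ> tr k' ?N"
    have NS: "?N \<in> {1..?N}" by simp
    have rp: "\<rho> permutes {1..?N}" unfolding \<rho>_def
      by (intro permutes_compose permutes_swap_id p k k'S NS)
    have rN: "\<rho> ?N = ?N" using pk' by (simp add: \<rho>_def)
    have rp': "\<rho> permutes {1..n}" using permutes_shrink[OF rp rN] .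
    have dec: "tr k ?N \<circ> \<pi> = \<rho> \<circ> tr k' ?N" by (simp add: \<rho>_def o_assoc[symmetric])
    have pf: "permutation (tr a b)" for a b :: nat by (rule permutation_swap_id)
    have pp: "permutation \<pi>" using p permutation_permutes by blast
    have sr: "sign \<rho> = sign (tr k ?N) * sign \<pi> * sign (tr k' ?N)"
      unfolding \<rho>_def by (simp add: sign_compose pf pp permutation_compose)
    have "fm ?N m f (map (rn (tr k ?N)) (map (rn \<pi>) u)) = fm ?N m f (map (rn \<rho>) (map (rn (tr k' ?N)) u))"
      by (simp add: rn_comp[symmetric] dec)
    also have "\<dots> = of_int (sign \<rho>) * fm ?N m f (map (rn (tr k' ?N)) u)"
      using fm_alt[OF fp alt rp'] .
    finally have "of_int (sign (tr k ?N)) * fm ?N m f (map (rn (tr k ?N)) (map (rn \<pi>) u))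
        = of_int (sign (tr k ?N) * sign \<rho>) * fm ?N m f (map (rn (tr k' ?N)) u)"
      by (simp add: mult.assoc)
    also have "sign (tr k ?N) * sign \<rho> = sign \<pi> * sign (tr k' ?N)"
      unfolding sr by (simp add: mult.assoc[symmetric])
    finally show ?thesis by (simp add: k'_def mult.assoc)
  qed
  have "Hm ?N m f (map (rn \<pi>) u) = (\<Sum>k\<in>{1..?N}. of_int (sign \<pi>) * ?G (inv \<pi> k))"
    unfolding Hm_def by (rule sum.cong[OF refl]) (rule trm)
  also have "\<dots> = of_int (sign \<pi>) * (\<Sum>k\<in>{1..?N}. ?G (inv \<pi> k))"
    by (rule sum_distrib_left[symmetric])
  also have "(\<Sum>k\<in>{1..?N}. ?G (inv \<pi> k)) = (\<Sum>k\<in>{1..?N}. ?G k)"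
    using sum.reindex_bij_betw[OF permutes_imp_bij[OF permutes_inv[OF p]], of ?G] by simp
  also have "\<dots> = Hm ?N m f u" by (simp add: Hm_def)
  finally show ?thesis .
qed




lemma Hm_lc:
  "Hm N m f = lc ({1..N} \<times> {w. f w \<noteq> 0}) (\<lambda>(k, w). of_int (sign (tr k N)) * f w)
      (\<lambda>(k, w). map (rn (tr k N)) (mapw (alpha N m) w))"
proof (rule ext)
  fix u
  have "Hm N m f u = (\<Sum>k\<in>{1..N}. \<Sum>w\<in>{w. f w \<noteq> 0}. of_int (sign (tr k N)) * f w * fmon (map (rn (tr k N)) (mapw (alpha N m) w)) u)"
    unfolding Hm_def fm_def lc_def
    by (simp add: sum_distrib_left fmon_map_invol mult.assoc)
  also have "\<dots> = lc ({1..N} \<times> {w. f w \<noteq> 0}) (\<lambda>(k, w). of_int (sign (tr k N)) * f w)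
      (\<lambda>(k, w). map (rn (tr k N)) (mapw (alpha N m) w)) u"
    unfolding lc_def by (simp add: sum.cartesian_product split_def)
  finally show "Hm N m f u = lc ({1..N} \<times> {w. f w \<noteq> 0}) (\<lambda>(k, w). of_int (sign (tr k N)) * f w)
      (\<lambda>(k, w). map (rn (tr k N)) (mapw (alpha N m) w)) u" .
qed

lemma count_rep_Z: "count_list (replicate m Z) (X j) = 0"
  by (induction m) auto

lemma count_mapw_alpha: "count_list (mapw (alpha N m) w) (X j) = count_list w (X j)"
  by (induction w) (auto simp: alpha_def count_rep_Z)

lemma count_map_tr: "count_list (map (rn (tr a b)) u) (X i) = count_list u (X (tr a b i))"
proof -
  have "inj (rn (tr a b))" by (rule inj_rn) (meson injI transpose_eq_imp_eq)
  from count_list_map_conv[OF this, of u "X (tr a b i)"] show ?thesis by simp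
qed

lemma Hm_CAP:
  fixes f :: "'c::comm_ring_1 fa"
  assumes fp: "fpoly f" and alt: "alternating n f" and ml: "multilinear (Suc n) f"
  shows "Hm (Suc n) m f \<in> CAP (Suc n)"
proof (rule L1)
  let ?N = "Suc n"
  have fS: "finite {w. f w \<noteq> 0}" using fp by (simp add: fpoly_def)
  show "fpoly (Hm ?N m f)" unfolding Hm_lc by (rule lc_fpoly) (simp add: fS)
  show "Hm ?N m f (map (rn \<pi>) u) = of_int (sign \<pi>) * Hm ?N m f u" if "\<pi> permutes {1..?N}" for \<pi> u
    using Hm_alt[OF fp alt that] .
  show "count_list u (X i) = 1" if nz: "Hm ?N m f u \<noteq> 0" and iN: "i \<in> {1..?N}" for u i
  proof -
    obtain k w where kw: "(k, w) \<in> {1..?N} \<times> {w. f w \<noteq> 0}" "map (rn (tr k ?N)) (mapw (alpha ?N m) w) = u"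
      using lc_nz[OF nz[unfolded Hm_lc]] by auto
    have "tr k ?N i \<in> {1..?N}" using iN kw(1) by (auto simp: Transposition.transpose_def)
    then have "count_list w (X (tr k ?N i)) = 1" using ml kw(1) by (auto simp: multilinear_def)
    then show ?thesis using kw(2) count_map_tr count_mapw_alpha by metis
  qed
qed




definition rhoS :: "nat set \<Rightarrow> var \<Rightarrow> var list" where
  "rhoS S v = (case v of X i \<Rightarrow> if i \<in> S then [Z, X i] else [X i] | _ \<Rightarrow> [v])"

definition dw :: "nat \<Rightarrow> nat set \<Rightarrow> nat \<Rightarrow> var \<Rightarrow> var list" where
  "dw n S j v = (case v of X i \<Rightarrow> (if i \<in> S \<and> i \<in> {1..n} then [Z, X i]
             else if i = n + 1 then replicate (n - j) Z @ [X (n+1)] else [X i]) | _ \<Rightarrow> [v])"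

lemma mapw_rhoS_rep[simp]: "mapw (rhoS S) (replicate m Z) = replicate m Z"
  by (induction m) (auto simp: rhoS_def)

lemma delta_dw: "delta_sub n S j = (\<lambda>v. fmon (dw n S j v))"
proof (rule ext)
  fix v show "delta_sub n S j v = fmon (dw n S j v)"
    by (cases v) (simp_all add: delta_sub_def dw_def)
qed

definition gam :: "nat \<Rightarrow> nat set \<Rightarrow> nat \<Rightarrow> var \<Rightarrow> var list" where
  "gam n S k v = mapw (rhoS S) (map (rn (tr k (Suc n))) (alpha (Suc n) (n - card S) v))"

lemma gam_eta: "gam n S k = (\<lambda>v. mapw (rhoS S) (map (rn (tr k (Suc n))) (alpha (Suc n) (n - card S) v)))"
  by (rule ext) (simp add: gam_def)

lemma mapw_map_mapw: "mapw g (map r (mapw h w)) = mapw (\<lambda>v. mapw g (map r (h v))) w"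
  by (induction w) auto

lemma gam_N:
  assumes "S \<subseteq> {1..n}"
  shows "gam n S (Suc n) = dw n S (card S)"
proof (rule ext)
  fix v
  show "gam n S (Suc n) v = dw n S (card S) v"
  proof (cases v)
    case (X i)
    show ?thesis
    proof (cases "i = Suc n")
      case True
      have "Suc n \<notin> S" using assms by auto
      then show ?thesis using X True by (simp add: gam_def dw_def alpha_def rhoS_def mapw_single)
    next
      case False
      have "i \<in> S \<Longrightarrow> i \<in> {1..n}" using assms by auto
      then show ?thesis using X False by (auto simp: gam_def dw_def alpha_def rhoS_def)
    qed
  qed (simp_all add: gam_def dw_def alpha_def rhoS_def)
qed

lemma gam_shift:
  assumes S: "S \<subseteq> {1..n}" and k: "k \<in> {1..n}"
  shows "gam n S k = gam n (S - {k}) k"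
proof (rule ext)
  fix v
  have fS: "finite S" using S finite_subset by blast
  have kN: "k \<noteq> Suc n" using k by auto
  show "gam n S k v = gam n (S - {k}) k v"
  proof (cases "k \<in> S")
    case False then show ?thesis by simp
  next
    case True
    have cS: "card S \<le> n" using card_mono[OF _ S] by simp
    have c1: "card (S - {k}) = card S - 1" using True fS by simp
    have cpos: "card S \<ge> 1" using True fS card_0_eq by fastforce
    have m: "n - card (S - {k}) = Suc (n - card S)" using c1 cS cpos by simp
    show ?thesis
    proof (cases v)
      case (X i)
      show ?thesis
      proof (cases "i = Suc n")
        case True
        have "Suc n \<notin> S" using S by auto
        have e1: "replicate (n - card S) Z @ [Z, X k] = replicate (Suc (n - card S)) Z @ [X k]"
          by (simp add: replicate_append_same[symmetric])
        have g1: "gam n S k v = replicate (n - card S) Z @ [Z, X k]"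
          using X True \<open>k \<in> S\<close> kN by (simp add: gam_def alpha_def rhoS_def)
        have g2: "gam n (S - {k}) k v = replicate (n - card (S - {k})) Z @ [X k]"
          using X True \<open>k \<in> S\<close> kN \<open>Suc n \<notin> S\<close> by (simp add: gam_def alpha_def rhoS_def)
        show ?thesis unfolding g1 g2 m e1 ..
      next
        case False
        then show ?thesis using X kN
          by (cases "i = k") (auto simp: gam_def alpha_def rhoS_def Transposition.transpose_def)
      qed
    qed (simp_all add: gam_def alpha_def rhoS_def)
  qed
qed

lemma pair_cancel:
  fixes \<phi> :: "nat set \<Rightarrow> 'c::comm_ring_1"
  assumes fA: "finite A" and k: "k \<in> A"
  shows "(\<Sum>S\<in>Pow A. (-1) ^ card S * \<phi> (S - {k})) = 0"
proof -
  define B where "B = A - {k}"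
  have A: "A = insert k B" and kB: "k \<notin> B" and fB: "finite B" using k fA by (auto simp: B_def)
  have inj: "inj_on (insert k) (Pow B)" using kB by (auto simp: inj_on_def)
  have disj: "Pow B \<inter> insert k ` Pow B = {}" using kB by auto
  have "(\<Sum>S\<in>Pow A. (-1) ^ card S * \<phi> (S - {k}))
      = (\<Sum>S\<in>Pow B. (-1) ^ card S * \<phi> (S - {k})) + (\<Sum>S\<in>insert k ` Pow B. (-1) ^ card S * \<phi> (S - {k}))"
    unfolding A Pow_insert by (rule sum.union_disjoint) (use fB disj in auto)
  also have "(\<Sum>S\<in>insert k ` Pow B. (-1) ^ card S * \<phi> (S - {k})) = (\<Sum>S\<in>Pow B. (-1) ^ card (insert k S) * \<phi> (insert k S - {k}))"
    using sum.reindex[OF inj, of "\<lambda>S. (-1) ^ card S * \<phi> (S - {k})"] by (simp only: o_def)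
  also have "\<dots> = (\<Sum>S\<in>Pow B. - ((-1) ^ card S * \<phi> (S - {k})))"
  proof (rule sum.cong[OF refl])
    fix S assume "S \<in> Pow B"
    then have "k \<notin> S" "finite S" using kB fB finite_subset by auto
    then show "(-1) ^ card (insert k S) * \<phi> (insert k S - {k}) = - ((-1) ^ card S * \<phi> (S - {k}))"
      by simp
  qed
  finally show ?thesis by (simp add: sum_negf)
qed

theorem proposition2p9:
  fixes f :: "'c::comm_ring_1 fa" and n :: nat
  assumes "in_x_t (n+1) f"
    and "multilinear (n+1) f"
    and "alternating n f"
  shows "(\<lambda>u. \<Sum>j\<le>n. (-1)^j *
            (\<Sum>S\<in>{S. S \<subseteq> {1..n} \<and> card S = j}. fsubst (delta_sub n S j) f u))
         \<in> CAP (n+1)"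
proof -
  have fp: "fpoly f" using assms(1) by (simp add: in_x_t_def)
  have ml: "multilinear (Suc n) f" using assms(2) by simp
  have alt: "alternating n f" using assms(3) .
  let ?Sf = "{w. f w \<noteq> 0}"
  have fS: "finite ?Sf" using fp by (simp add: fpoly_def)
  let ?I = "{1..Suc n} \<times> ?Sf"
  define R where "R S = fsubst (\<lambda>v. fmon (rhoS S v)) (Hm (Suc n) (n - card S) f)" for S
  have RC: "R S \<in> CAP (Suc n)" for S
    unfolding R_def using Hm_CAP[OF fp alt ml] unfolding CAP_def
    by (rule tideal.subst) (simp add: fpoly_fmon)
  define Phi where "Phi k S = lc ?Sf f (\<lambda>w. mapw (gam n S k) w)" for k S
  define D where "D S = lc ?Sf f (\<lambda>w. mapw (dw n S (card S)) w)" for S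
  have Rsplit: "R S u = D S u - (\<Sum>k\<in>{1..n}. Phi k S u)" if S: "S \<subseteq> {1..n}" for S u
  proof -
    have "R S = lc ?I (\<lambda>(k, w). of_int (sign (tr k (Suc n))) * f w)
               (\<lambda>i. mapw (rhoS S) ((\<lambda>(k, w). map (rn (tr k (Suc n))) (mapw (alpha (Suc n) (n - card S)) w)) i))"
      unfolding R_def Hm_lc by (rule fsubst_lc) (simp add: fS)
    also have "(\<lambda>i. mapw (rhoS S) ((\<lambda>(k, w). map (rn (tr k (Suc n))) (mapw (alpha (Suc n) (n - card S)) w)) i))
        = (\<lambda>(k, w). mapw (gam n S k) w)"
      by (rule ext) (simp add: split_def mapw_map_mapw gam_eta)
    finally have "R S u = (\<Sum>k\<in>{1..Suc n}. \<Sum>w\<in>?Sf. of_int (sign (tr k (Suc n))) * f w * fmon (mapw (gam n S k) w) u)"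
      by (simp add: lc_def sum.cartesian_product split_def)
    also have "\<dots> = (\<Sum>w\<in>?Sf. f w * fmon (mapw (gam n S (Suc n)) w) u)
        + (\<Sum>k\<in>{1..n}. \<Sum>w\<in>?Sf. of_int (sign (tr k (Suc n))) * f w * fmon (mapw (gam n S k) w) u)"
    proof -
      let ?G = "\<lambda>k. \<Sum>w\<in>?Sf. of_int (sign (tr k (Suc n))) * f w * fmon (mapw (gam n S k) w) u"
      have st: "{1..Suc n} = insert (Suc n) {1..n}" by auto
      have "sum ?G {1..Suc n} = ?G (Suc n) + sum ?G {1..n}"
        unfolding st by (rule sum.insert) auto
      moreover have "?G (Suc n) = (\<Sum>w\<in>?Sf. f w * fmon (mapw (gam n S (Suc n)) w) u)"
        by simp
      ultimately show ?thesis by simp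
    qed
    also have "(\<Sum>k\<in>{1..n}. \<Sum>w\<in>?Sf. of_int (sign (tr k (Suc n))) * f w * fmon (mapw (gam n S k) w) u)
        = (\<Sum>k\<in>{1..n}. - Phi k S u)"
    proof (rule sum.cong[OF refl])
      fix k assume "k \<in> {1..n}"
      then have "sign (tr k (Suc n)) = -1" by (simp add: sign_swap_id)
      then show "(\<Sum>w\<in>?Sf. of_int (sign (tr k (Suc n))) * f w * fmon (mapw (gam n S k) w) u) = - Phi k S u"
        by (simp add: Phi_def lc_def sum_negf)
    qed
    also have "(\<Sum>w\<in>?Sf. f w * fmon (mapw (gam n S (Suc n)) w) u) = D S u"
      using gam_N[OF S] by (simp add: D_def lc_def)
    finally show ?thesis by (simp add: sum_negf)
  qed
  have Dfs: "fsubst (delta_sub n S j) f = lc ?Sf f (\<lambda>w. mapw (dw n S j) w)" for S j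
  proof -
    have e: "lc ?Sf f id = f" using fpoly_lc[OF fp] by simp
    have "fsubst (delta_sub n S j) f = fsubst (\<lambda>v. fmon (dw n S j v)) (lc ?Sf f id)"
      by (simp only: delta_dw e)
    also have "\<dots> = lc ?Sf f (\<lambda>w. mapw (dw n S j) (id w))" by (rule fsubst_lc[OF fS])
    finally show ?thesis by simp
  qed
  have target: "(\<Sum>j\<le>n. (-1)^j * (\<Sum>S\<in>{S. S \<subseteq> {1..n} \<and> card S = j}. fsubst (delta_sub n S j) f u))
      = (\<Sum>S\<in>Pow {1..n}. (-1) ^ card S * R S u)" for u
  proof -
    have "(\<Sum>j\<le>n. (-1)^j * (\<Sum>S\<in>{S. S \<subseteq> {1..n} \<and> card S = j}. fsubst (delta_sub n S j) f u))
        = (\<Sum>j\<le>n. \<Sum>S\<in>{S \<in> Pow {1..n}. card S = j}. (-1) ^ card S * D S u)"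
    proof (rule sum.cong[OF refl])
      fix j
      have "{S. S \<subseteq> {1..n} \<and> card S = j} = {S \<in> Pow {1..n}. card S = j}" by auto
      then show "(-1)^j * (\<Sum>S\<in>{S. S \<subseteq> {1..n} \<and> card S = j}. fsubst (delta_sub n S j) f u)
          = (\<Sum>S\<in>{S \<in> Pow {1..n}. card S = j}. (-1) ^ card S * D S u)"
        by (simp add: sum_distrib_left Dfs D_def)
    qed
    also have "\<dots> = (\<Sum>S\<in>Pow {1..n}. (-1) ^ card S * D S u)"
    proof (rule sum.group)
      show "card ` Pow {1..n} \<subseteq> {..n}"
        using card_mono[of "{1..n}"] by fastforce
    qed auto
    also have "\<dots> = (\<Sum>S\<in>Pow {1..n}. (-1) ^ card S * R S u)
        + (\<Sum>k\<in>{1..n}. \<Sum>S\<in>Pow {1..n}. (-1) ^ card S * Phi k S u)"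
    proof -
      have "(\<Sum>S\<in>Pow {1..n}. (-1) ^ card S * R S u) = (\<Sum>S\<in>Pow {1..n}. (-1) ^ card S * D S u - (\<Sum>k\<in>{1..n}. (-1) ^ card S * Phi k S u))"
        by (rule sum.cong[OF refl]) (simp add: Rsplit right_diff_distrib sum_distrib_left)
      also have "\<dots> = (\<Sum>S\<in>Pow {1..n}. (-1) ^ card S * D S u) - (\<Sum>k\<in>{1..n}. \<Sum>S\<in>Pow {1..n}. (-1) ^ card S * Phi k S u)"
        by (simp only: sum_subtractf sum.swap[of _ "Pow {1..n}" "{1..n}"])
      finally show ?thesis by simp
    qed
    also have "(\<Sum>k\<in>{1..n}. \<Sum>S\<in>Pow {1..n}. (-1) ^ card S * Phi k S u) = 0"
    proof (rule sum.neutral, rule ballI)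
      fix k assume k: "k \<in> {1..n}"
      have "(\<Sum>S\<in>Pow {1..n}. (-1) ^ card S * Phi k S u) = (\<Sum>S\<in>Pow {1..n}. (-1) ^ card S * Phi k (S - {k}) u)"
      proof (rule sum.cong[OF refl])
        fix S assume "S \<in> Pow {1..n}"
        then have "gam n S k = gam n (S - {k}) k" using gam_shift[OF _ k] by blast
        then show "(-1) ^ card S * Phi k S u = (-1) ^ card S * Phi k (S - {k}) u"
          by (simp only: Phi_def)
      qed
      also have "\<dots> = 0" using pair_cancel[of "{1..n}" k "\<lambda>S. Phi k S u"] k by simp
      finally show "(\<Sum>S\<in>Pow {1..n}. (-1) ^ card S * Phi k S u) = 0" .
    qed
    finally show ?thesis by simp
  qed
  have mem: "(\<lambda>u. \<Sum>S\<in>Pow {1..n}. (-1) ^ card S * R S u) \<in> CAP (Suc n)"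
  proof -
    have "\<forall>S\<in>Pow {1..n}. (\<lambda>u. (-1) ^ card S * R S u) \<in> CAP (Suc n)"
      using tideal_smult RC unfolding CAP_def by blast
    then show ?thesis using tideal_sum[of "Pow {1..n}" "\<lambda>S u. (-1) ^ card S * R S u"] unfolding CAP_def by simp
  qed
  have eq: "(\<lambda>u. \<Sum>j\<le>n. (-1)^j *
            (\<Sum>S\<in>{S. S \<subseteq> {1..n} \<and> card S = j}. fsubst (delta_sub n S j) f u))
        = (\<lambda>u. \<Sum>S\<in>Pow {1..n}. (-1) ^ card S * R S u)"
    by (rule ext) (rule target)
  show ?thesis using mem unfolding eq by simp
qed



end
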